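(* Let $A$ be a $\Gamma$-ring and $I\subseteq A$ an ideal such that $A/I$ inherits a $\Gamma$-ring structure making $A\to A/I$ a homomorphism of $\Gamma$-rings (i.e. $\Gamma\cdot I\subseteq I$). Let $T=3\,Q_0+2a\,Q_2\in\Gamma$ and let $N\colon A\to A$ be \begin{align*} Nx &= (Q_0x)^3 +2a\, (Q_0x)^2Q_2x -a\, Q_0x(Q_1x)^2 + a^2\,Q_0x(Q_2x)^2 - 6\, Q_0x\, Q_1x \, Q_2 x \\ &\qquad +2\,(Q_1x)^3 -2a\, Q_1x(Q_2x)^2 +4\,(Q_2x)^3. \end{align*} Then for every $x\in I$, \[ N(1+x)\equiv 1+Tx \mod I^2 . \]
   Context: $R=\mathbb{Z}[a]$ is a polynomial ring. $\Gamma$ is the associative ring equipped with a ring homomorphism $\eta\colon R\to\Gamma$, generated over $R$ by $Q_0,Q_1,Q_2$ subject to: (i) the $Q_i$ commute with elements of $\mathbb{Z}\subset R$, and $Q_0\,a = a^2Q_0-2aQ_1+6Q_2$, $Q_1\,a=3Q_0+aQ_2$, $Q_2\,a=-aQ_0+3Q_1$; (ii) $Q_1Q_0=2Q_2Q_1-2Q_0Q_2$ and $Q_2Q_0=Q_0Q_1+aQ_0Q_2-2Q_1Q_2$. A $\Gamma$-ring is a commutative $R$-algebra $A$ with a left $\Gamma$-module structure extending its $R$-module structure, such that $Q_0\cdot 1=1$, $Q_1\cdot1=Q_2\cdot 1=0$, and the cartan formulas hold for all $x,y\in A$: $Q_0(xy) = Q_0x\,Q_0y + 2\,Q_1x\,Q_2y+2\,Q_2x\,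 Q_1y$, $Q_1(xy) = Q_0x\, Q_1y + Q_1x\, Q_0y + a\,Q_1x\, Q_2y +a\, Q_2x\, Q_1y +2\, Q_2x\, Q_2y$, $Q_2(xy) = Q_0x\, Q_2y+Q_2x\, Q_0y+Q_1x\, Q_1y + a\, Q_2x\, Q_2y$. *)

theory Defs
  imports Main
begin

text \<open>A Gamma-ring: a commutative ring A which is an algebra over R = Z[a]
  (determined by the image al of the variable a), together with the action of
  the generators Q0, Q1, Q2 of Gamma, given by additive maps A -> A that satisfy
  the defining relations of Gamma (so that they extend to a left Gamma-module
  structure extending the R-module structure), the unit conditions and the
  Cartan formulas.\<close>

definition gamma_ring ::
  "'a::comm_ring_1 \<Rightarrow> ('a \<Rightarrow> 'a) \<Rightarrow> ('a \<Rightarrow> 'a) \<Rightarrow> ('a \<Rightarrow> 'a) \<Rightarrow> bool" where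
  "gamma_ring al Q0 Q1 Q2 \<longleftrightarrow>
     (\<forall>x y. Q0 (x + y) = Q0 x + Q0 y) \<and>
     (\<forall>x y. Q1 (x + y) = Q1 x + Q1 y) \<and>
     (\<forall>x y. Q2 (x + y) = Q2 x + Q2 y) \<and>
     (\<forall>x. Q0 (al * x) = al^2 * Q0 x - 2 * al * Q1 x + 6 * Q2 x) \<and>
     (\<forall>x. Q1 (al * x) = 3 * Q0 x + al * Q2 x) \<and>
     (\<forall>x. Q2 (al * x) = - al * Q0 x + 3 * Q1 x) \<and>
     (\<forall>x. Q1 (Q0 x) = 2 * Q2 (Q1 x) - 2 * Q0 (Q2 x)) \<and>
     (\<forall>x. Q2 (Q0 x) = Q0 (Q1 x) + al * Q0 (Q2 x) - 2 * Q1 (Q2 x)) \<and>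
     Q0 1 = 1 \<and> Q1 1 = 0 \<and> Q2 1 = 0 \<and>
     (\<forall>x y. Q0 (x * y) = Q0 x * Q0 y + 2 * Q1 x * Q2 y + 2 * Q2 x * Q1 y) \<and>
     (\<forall>x y. Q1 (x * y) = Q0 x * Q1 y + Q1 x * Q0 y + al * Q1 x * Q2 y
                          + al * Q2 x * Q1 y + 2 * Q2 x * Q2 y) \<and>
     (\<forall>x y. Q2 (x * y) = Q0 x * Q2 y + Q2 x * Q0 y + Q1 x * Q1 y + al * Q2 x * Q2 y)"

definition is_ideal :: "'a::comm_ring_1 set \<Rightarrow> bool" where
  "is_ideal I \<longleftrightarrow> 0 \<in> I \<and> (\<forall>x\<in>I. \<forall>y\<in>I. x + y \<in> I) \<and> (\<forall>r. \<forall>x\<in>I. r * x \<in> I)"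

definition ideal_sq :: "'a::comm_ring_1 set \<Rightarrow> 'a set" where
  "ideal_sq I = {s. \<exists>n (x::nat \<Rightarrow> 'a) y. (\<forall>i<n. x i \<in> I \<and> y i \<in> I) \<and> s = (\<Sum>i<n. x i * y i)}"

definition normN :: "'a::comm_ring_1 \<Rightarrow> ('a \<Rightarrow> 'a) \<Rightarrow> ('a \<Rightarrow> 'a) \<Rightarrow> ('a \<Rightarrow> 'a) \<Rightarrow> 'a \<Rightarrow> 'a" where
  "normN al Q0 Q1 Q2 x =
     (Q0 x)^3 + 2 * al * (Q0 x)^2 * Q2 x - al * Q0 x * (Q1 x)^2 + al^2 * Q0 x * (Q2 x)^2
     - 6 * Q0 x * Q1 x * Q2 x + 2 * (Q1 x)^3 - 2 * al * Q1 x * (Q2 x)^2 + 4 * (Q2 x)^3"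

definition opT :: "'a::comm_ring_1 \<Rightarrow> ('a \<Rightarrow> 'a) \<Rightarrow> ('a \<Rightarrow> 'a) \<Rightarrow> 'a \<Rightarrow> 'a" where
  "opT al Q0 Q2 x = 3 * Q0 x + 2 * al * Q2 x"

end

theory Submission
  imports Defs
begin

lemma sq3:
  fixes u v w P Q R :: "'a::comm_ring_1"
  assumes "u \<in> I" "v \<in> I" "w \<in> I" "P \<in> I" "Q \<in> I" "R \<in> I"
  shows "u*P + v*Q + w*R \<in> ideal_sq I"
proof -
  have e: "{..<3::nat} = {0,1,2}" by auto
  define f where "f = (\<lambda>i::nat. if i = 0 then u else if i = 1 then v else w)"
  define g where "g = (\<lambda>i::nat. if i = 0 then P else if i = 1 then Q else R)"
  have s: "(\<Sum>i<3. f i * g i) = u*P + v*Q + w*R"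
    unfolding e by (simp add: f_def g_def add.assoc)
  have m: "\<forall>i<3. f i \<in> I \<and> g i \<in> I"
  proof (intro allI impI)
    fix i :: nat assume "i < 3"
    then have "i \<in> {..<3}" by simp
    then have "i = 0 \<or> i = 1 \<or> i = 2" unfolding e by blast
    then show "f i \<in> I \<and> g i \<in> I" using assms unfolding f_def g_def by auto
  qed
  have c: "(\<forall>i<3. f i \<in> I \<and> g i \<in> I) \<and> u*P + v*Q + w*R = (\<Sum>i<3. f i * g i)"
    using m s by (intro conjI) (assumption, rule sym)
  have "\<exists>(n::nat) x y. (\<forall>i<n. x i \<in> I \<and> y i \<in> I) \<and> u*P + v*Q + w*R = (\<Sum>i<n. x i * y i)"
    using c by meson
  then show ?thesis unfolding ideal_sq_def by (rule CollectI)
qed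

lemma id3: fixes al u v w :: "'a::comm_ring_1"
  shows "((1+u)^3 + 2 * al * (1+u)^2 * w - al * (1+u) * v^2 + al^2 * (1+u) * w^2
     - 6 * (1+u) * v * w + 2 * v^3 - 2 * al * v * w^2 + 4 * w^3) - (1 + (3*u + 2*al*w))
   = u*(3*u+u^2+2*al*w*(2+u)) + v*(-al*(1+u)*v - 6*(1+u)*w + 2*v^2 - 2*al*w^2) + w*(al^2*(1+u)*w + 4*w^2)"
  by (simp add: algebra_simps power2_eq_square power3_eq_cube)

theorem mainTheorem5:
  fixes al :: "'a::comm_ring_1" and Q0 Q1 Q2 :: "'a \<Rightarrow> 'a" and I :: "'a set"
  assumes "gamma_ring al Q0 Q1 Q2"
    and "is_ideal I"
    and "\<forall>x\<in>I. Q0 x \<in> I \<and> Q1 x \<in> I \<and> Q2 x \<in> I"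
    and "x \<in> I"
  shows "normN al Q0 Q1 Q2 (1 + x) - (1 + opT al Q0 Q2 x) \<in> ideal_sq I"
proof -
  define u where "u = Q0 x"
  define v where "v = Q1 x"
  define w where "w = Q2 x"
  have uI: "u \<in> I" and vI: "v \<in> I" and wI: "w \<in> I" using assms(3,4) by (auto simp: u_def v_def w_def)
  have h0: "Q0 (1 + x) = 1 + u" and h1: "Q1 (1+x) = v" and h2: "Q2 (1+x) = w"
  proof -
    from assms(1) have a0: "Q0 (1+x) = Q0 1 + Q0 x" and a1: "Q1 (1+x) = Q1 1 + Q1 x"
      and a2: "Q2 (1+x) = Q2 1 + Q2 x" and b: "Q0 1 = 1" "Q1 1 = 0" "Q2 1 = 0"
      unfolding gamma_ring_def by blast+
    show "Q0 (1 + x) = 1 + u" "Q1 (1+x) = v" "Q2 (1+x) = w"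
      by (simp_all only: a0 a1 a2 b u_def v_def w_def add_0)
  qed
  have add: "\<And>a b. a \<in> I \<Longrightarrow> b \<in> I \<Longrightarrow> a + b \<in> I"
    and mul: "\<And>r a. a \<in> I \<Longrightarrow> r * a \<in> I" using assms(2) by (auto simp: is_ideal_def)
  define P where "P = 3*u+u^2+2*al*w*(2+u)"
  define Q where "Q = -al*(1+u)*v - 6*(1+u)*w + 2*v^2 - 2*al*w^2"
  define R where "R = al^2*(1+u)*w + 4*w^2"
  have PI: "P \<in> I" unfolding P_def
  proof -
    have "3*u+u^2+2*al*w*(2+u) = 3*u + u*u + (2*al*(2+u))*w" by (simp add: algebra_simps power2_eq_square)
    moreover have "3*u + u*u + (2*al*(2+u))*w \<in> I" by (rule add[OF add[OF mul[OF uI] mul[OF uI]] mul[OF wI]])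
    ultimately show "3*u+u^2+2*al*w*(2+u) \<in> I" by (simp only:)
  qed
  have QI: "Q \<in> I"
  proof -
    have "Q = (-al*(1+u) + 2*v)*v + (- 6*(1+u) - 2*al*w)*w" unfolding Q_def by (simp add: algebra_simps power2_eq_square)
    moreover have "(-al*(1+u) + 2*v)*v + (- 6*(1+u) - 2*al*w)*w \<in> I" by (rule add[OF mul[OF vI] mul[OF wI]])
    ultimately show ?thesis by (simp only:)
  qed
  have RI: "R \<in> I"
  proof -
    have "R = (al^2*(1+u) + 4*w)*w" unfolding R_def by (simp add: algebra_simps power2_eq_square)
    moreover have "(al^2*(1+u) + 4*w)*w \<in> I" by (rule mul[OF wI])
    ultimately show ?thesis by (simp only:)
  qed
  have eq: "normN al Q0 Q1 Q2 (1 + x) - (1 + opT al Q0 Q2 x) = u*P + v*Q + w*R"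
    unfolding normN_def opT_def h0 h1 h2 P_def Q_def R_def u_def[symmetric] w_def[symmetric]
    by (rule id3)
  show ?thesis unfolding eq by (rule sq3[OF uI vI wI PI QI RI])
qed

end
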